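(* For each $N$ let $\sigma_{N1}\ge\cdots\ge\sigma_{NN}>0$ satisfy $$\lim_{N\to\infty}\sigma_{N1}\Big(\sum_{n=1}^N\sigma_{Nn}^{-7}\Big)\Big(\sum_{n=1}^N\sigma_{Nn}^{-4}\Big)^{-3/2}=0,$$ let $\alpha>0$, and let $\pi$ be a probability density with $|\hat\pi(\omega)|\le C_\pi<1$ for all $|\omega|\ge2$. With $h_N=\big(\frac1\alpha\sum_{n=1}^N(2\sigma_{Nn})^{-4}\int\sin^2(t/\sigma_{Nn})\,\pi(t/\sigma_{N1})\sigma_{N1}^{-1}\,dt\big)^{-1/4}$, we have $$\lim_{N\to\infty}\max_{1\le n\le N}\frac{h_N}{\sigma_{Nn}}=\lim_{N\to\infty}\frac{h_N}{\sigma_{NN}}=0 .$$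
   Context: $\hat\pi(\omega)=\int e^{-i\omega t}\pi(t)\,dt$ is the Fourier transform of $\pi$. *)

theory Defs
  imports "HOL-Analysis.Analysis"
begin

definition fourier_transform :: "(real \<Rightarrow> real) \<Rightarrow> real \<Rightarrow> complex" where
  "fourier_transform p \<omega> =
     integral\<^sup>L lborel (\<lambda>t. exp (- (\<i> * complex_of_real (\<omega> * t))) * complex_of_real (p t))"

definition prob_density :: "(real \<Rightarrow> real) \<Rightarrow> bool" where
  "prob_density p \<longleftrightarrow> p \<in> borel_measurable borel \<and> (\<forall>t. 0 \<le> p t)
     \<and> integrable lborel p \<and> integral\<^sup>L lborel p = 1"

definition bandwidth :: "real \<Rightarrow> (real \<Rightarrow> real) \<Rightarrow> (nat \<Rightarrow> nat \<Rightarrow> real) \<Rightarrow> nat \<Rightarrow> real" where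
  "bandwidth \<alpha> p \<sigma> N =
     ((1 / \<alpha>) * (\<Sum>n = 1..N. (2 * \<sigma> N n) powr (-4) *
        integral\<^sup>L lborel (\<lambda>t. (sin (t / \<sigma> N n))\<^sup>2 * p (t / \<sigma> N 1) / \<sigma> N 1))) powr (-1/4)"

end

theory Submission
  imports Defs
begin


lemma re_ft:
  assumes d: "prob_density p"
  shows "Re (fourier_transform p w) = integral\<^sup>L lborel (\<lambda>t. cos (w*t) * p t)"
proof -
  have pm[measurable]: "p \<in> borel_measurable borel" and pi: "integrable lborel p"
    using d unfolding prob_density_def by auto
  have int: "integrable lborel (\<lambda>t. exp (- (\<i> * complex_of_real (w * t))) * complex_of_real (p t))"
  proof (rule Bochner_Integration.integrable_bound[where f="\<lambda>t. complex_of_real (p t)"])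
    show "integrable lborel (\<lambda>t. complex_of_real (p t))" using pi by simp
    show "(\<lambda>t. exp (- (\<i> * complex_of_real (w * t))) * complex_of_real (p t)) \<in> borel_measurable lborel"
      by measurable
    show "AE x in lborel. norm (exp (- (\<i> * complex_of_real (w * x))) * complex_of_real (p x)) \<le> norm (complex_of_real (p x))"
      by (simp add: norm_mult norm_exp)
  qed
  have "Re (fourier_transform p w) = integral\<^sup>L lborel (\<lambda>t. Re (exp (- (\<i> * complex_of_real (w * t))) * complex_of_real (p t)))"
    unfolding fourier_transform_def by (rule integral_bounded_linear[OF bounded_linear_Re int, symmetric])
  also have "\<dots> = integral\<^sup>L lborel (\<lambda>t. cos (w*t) * p t)"
  proof (rule Bochner_Integration.integral_cong)
    fix t
    have "exp (- (\<i> * complex_of_real (w * t))) = cis (-(w*t))" by (simp add: cis_conv_exp)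
    then show "Re (exp (- (\<i> * complex_of_real (w * t))) * complex_of_real (p t)) = cos (w*t) * p t"
      by simp
  qed simp
  finally show ?thesis .
qed

lemma K_eq:
  assumes d: "prob_density p" and a1: "a1 > 0" and an: "an > 0"
  shows "integral\<^sup>L lborel (\<lambda>t. (sin (t / an))\<^sup>2 * p (t / a1) / a1)
       = (1 - Re (fourier_transform p (2*a1/an))) / 2"
proof -
  have pm[measurable]: "p \<in> borel_measurable borel" and pi: "integrable lborel p" and p1: "integral\<^sup>L lborel p = 1"
    using d unfolding prob_density_def by auto
  have ci: "integrable lborel (\<lambda>t. cos (2*a1/an*t) * p t)"
  proof (rule Bochner_Integration.integrable_bound[OF pi])
    show "(\<lambda>t. cos (2*a1/an*t) * p t) \<in> borel_measurable lborel" by measurable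
    show "AE x in lborel. norm (cos (2*a1/an*x) * p x) \<le> norm (p x)"
      by (auto simp: abs_mult intro!: mult_left_le_one_le)
  qed
  have "integral\<^sup>L lborel (\<lambda>t. (sin (t / an))\<^sup>2 * p (t / a1) / a1)
      = \<bar>a1\<bar> *\<^sub>R integral\<^sup>L lborel (\<lambda>x. (sin ((0 + a1*x) / an))\<^sup>2 * p ((0 + a1*x) / a1) / a1)"
    by (rule lborel_integral_real_affine) (use a1 in simp)
  also have "\<dots> = \<bar>a1\<bar> *\<^sub>R integral\<^sup>L lborel (\<lambda>x. ((p x - cos (2*a1/an*x) * p x) / 2) / a1)"
  proof (intro arg_cong[where f="\<lambda>z. \<bar>a1\<bar> *\<^sub>R z"] Bochner_Integration.integral_cong refl)
    fix x
    have "cos (2*a1/an*x) = cos (2*(a1*x/an))" by (simp add: field_simps)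
    also have "\<dots> = 1 - 2 * (sin (a1*x/an))^2" by (rule cos_double_sin)
    finally show "(sin ((0 + a1*x) / an))\<^sup>2 * p ((0 + a1*x) / a1) / a1 = ((p x - cos (2*a1/an*x) * p x) / 2) / a1"
      using a1 by (simp add: field_simps) (metis distrib_left mult.right_neutral)
  qed
  also have "\<dots> = integral\<^sup>L lborel (\<lambda>x. (p x - cos (2*a1/an*x) * p x) / 2)"
    using a1 by simp
  also have "\<dots> = (1 - Re (fourier_transform p (2*a1/an))) / 2"
    using Bochner_Integration.integral_diff[OF pi ci] by (simp add: re_ft[OF d] p1)
  finally show ?thesis .
qed

lemma keybound:
  fixes T sN s1 S7 S c :: real
  assumes T: "T > 0" and sN: "sN > 0" and s1: "sN \<le> s1" and S7: "sN powr -7 \<le> S7"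
    and c: "c > 0" and S: "c * T \<le> S"
  shows "S powr (-1/4) / sN \<le> c powr (-1/4) * (s1 * S7 * T powr (-3/2)) powr (1/6)"
proof -
  define r where "r = sN powr -4 / T"
  have r0: "r > 0" using T sN by (simp add: r_def)
  have "S powr (-1/4) \<le> (c*T) powr (-1/4)"
    by (rule powr_mono2') (use T c S in auto)
  hence "S powr (-1/4) / sN \<le> (c*T) powr (-1/4) / sN" using sN by (simp add: divide_right_mono)
  also have "(c*T) powr (-1/4) / sN = c powr (-1/4) * r powr (1/4)"
  proof -
    have "r powr (1/4) = (sN powr -4) powr (1/4) / T powr (1/4)"
      unfolding r_def using T sN by (simp add: powr_divide)
    also have "\<dots> = sN powr -1 / T powr (1/4)" by (simp add: powr_powr)
    finally have "r powr (1/4) = sN powr -1 / T powr (1/4)" .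
    moreover have "(c*T) powr (-1/4) = c powr (-1/4) * T powr (-1/4)"
      using c T by (simp add: powr_mult)
    moreover have "c powr (1/4) > 0" using c by simp
    ultimately show ?thesis using sN T by (simp add: powr_minus powr_minus_divide field_simps)
  qed
  also have "r powr (1/4) = (r powr (3/2)) powr (1/6)" by (simp add: powr_powr)
  also have "r powr (3/2) \<le> s1 * S7 * T powr (-3/2)"
  proof -
    have "r powr (3/2) = (sN powr -4) powr (3/2) / T powr (3/2)"
      unfolding r_def using T sN by (simp add: powr_divide)
    also have "\<dots> = sN powr -6 / T powr (3/2)" by (simp add: powr_powr)
    finally have e1: "r powr (3/2) = sN powr -6 / T powr (3/2)" .
    have e: "(-6::real) = 1 + -7" by simp
    have e2: "sN powr -6 = sN powr 1 * sN powr -7" unfolding e by (rule powr_add)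
    have "sN powr 1 * sN powr -7 \<le> s1 * S7" using sN s1 S7 by (intro mult_mono) auto
    hence le: "sN powr -6 \<le> s1 * S7" using e2 by linarith
    have tp: "T powr (3/2) > 0" using T by simp
    have "sN powr -6 / T powr (3/2) \<le> s1 * S7 / T powr (3/2)"
      using le tp by (simp add: divide_right_mono)
    moreover have "T powr (-3/2) = 1 / T powr (3/2)" using T by (simp add: powr_minus_divide)
    ultimately show ?thesis using e1 by simp
  qed
  hence "(r powr (3/2)) powr (1/6) \<le> (s1 * S7 * T powr (-3/2)) powr (1/6)"
    by (intro powr_mono2) auto
  finally show ?thesis using c by (simp add: mult_left_mono)
qed

lemma K_lower:
  assumes d: "prob_density p" and a1: "a1 > 0" and an: "an > 0" and le: "an \<le> a1"
    and C: "\<And>\<omega>. 2 \<le> \<bar>\<omega>\<bar> \<Longrightarrow> norm (fourier_transform p \<omega>) \<le> C"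
  shows "(1 - C) / 2 \<le> integral\<^sup>L lborel (\<lambda>t. (sin (t / an))\<^sup>2 * p (t / a1) / a1)"
proof -
  have "2 \<le> \<bar>2*a1/an\<bar>" using a1 an le by (simp add: field_simps)
  hence "norm (fourier_transform p (2*a1/an)) \<le> C" by (rule C)
  moreover have "Re (fourier_transform p (2*a1/an)) \<le> norm (fourier_transform p (2*a1/an))"
    by (rule complex_Re_le_cmod)
  ultimately have "Re (fourier_transform p (2*a1/an)) \<le> C" by linarith
  thus ?thesis unfolding K_eq[OF d a1 an] by (intro divide_right_mono) auto
qed

theorem mainTheorem12:
  fixes \<sigma> :: "nat \<Rightarrow> nat \<Rightarrow> real" and \<alpha> C :: real and p :: "real \<Rightarrow> real"
  assumes pos: "\<And>N n. 1 \<le> n \<Longrightarrow> n \<le> N \<Longrightarrow> 0 < \<sigma> N n"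
    and mono: "\<And>N n m. 1 \<le> n \<Longrightarrow> n \<le> m \<Longrightarrow> m \<le> N \<Longrightarrow> \<sigma> N m \<le> \<sigma> N n"
    and lim: "(\<lambda>N. \<sigma> N 1 * (\<Sum>n = 1..N. \<sigma> N n powr (-7))
                 * (\<Sum>n = 1..N. \<sigma> N n powr (-4)) powr (-3/2)) \<longlonglongrightarrow> 0"
    and alpha: "0 < \<alpha>"
    and dens: "prob_density p"
    and C: "C < 1"
    and ft: "\<And>\<omega>. 2 \<le> \<bar>\<omega>\<bar> \<Longrightarrow> norm (fourier_transform p \<omega>) \<le> C"
  shows "(\<lambda>N. Max ((\<lambda>n. bandwidth \<alpha> p \<sigma> N / \<sigma> N n) ` {1..N})) \<longlonglongrightarrow> 0
       \<and> (\<lambda>N. bandwidth \<alpha> p \<sigma> N / \<sigma> N N) \<longlonglongrightarrow> 0"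
proof -
  define X where "X N = \<sigma> N 1 * (\<Sum>n = 1..N. \<sigma> N n powr (-7))
                 * (\<Sum>n = 1..N. \<sigma> N n powr (-4)) powr (-3/2)" for N
  define c where "c = (1 - C) / 2 / 16 / \<alpha>"
  have c: "c > 0" using C alpha by (simp add: c_def)
  have bnd: "bandwidth \<alpha> p \<sigma> N / \<sigma> N N \<le> c powr (-1/4) * X N powr (1/6)" if N: "N \<ge> 1" for N
  proof -
    define T where "T = (\<Sum>n = 1..N. \<sigma> N n powr (-4))"
    define S where "S = (1 / \<alpha>) * (\<Sum>n = 1..N. (2 * \<sigma> N n) powr (-4) *
        integral\<^sup>L lborel (\<lambda>t. (sin (t / \<sigma> N n))\<^sup>2 * p (t / \<sigma> N 1) / \<sigma> N 1))"
    have sN: "\<sigma> N N > 0" using pos N by auto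
    have s1: "\<sigma> N N \<le> \<sigma> N 1" using mono N by auto
    have fin: "finite {1..N}" by simp
    have NN: "N \<in> {1..N}" using N by auto
    have T4: "\<sigma> N N powr -4 \<le> T" unfolding T_def
      by (rule member_le_sum[OF NN _ fin]) auto
    hence T: "T > 0" using sN by (smt (verit) powr_gt_zero)
    have S7: "\<sigma> N N powr -7 \<le> (\<Sum>n = 1..N. \<sigma> N n powr (-7))"
      by (rule member_le_sum[OF NN _ fin]) auto
    have "c * T = (1/\<alpha>) * (\<Sum>n = 1..N. (2 * \<sigma> N n) powr (-4) * ((1 - C) / 2))"
    proof -
      have h16: "\<And>n. n \<in> {1..N} \<Longrightarrow> (2 * \<sigma> N n) powr (-4) = \<sigma> N n powr (-4) / 16"
      proof -
        fix n assume "n \<in> {1..N}"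
        hence "\<sigma> N n > 0" using pos by auto
        hence "(2 * \<sigma> N n) powr (-4) = 2 powr (-4) * \<sigma> N n powr (-4)" by (simp add: powr_mult)
        moreover have "(2::real) powr (-4) = 1/16" by (simp add: powr_minus_divide)
        ultimately show "(2 * \<sigma> N n) powr (-4) = \<sigma> N n powr (-4) / 16" by simp
      qed
      hence ea: "(\<Sum>n = 1..N. (2 * \<sigma> N n) powr (-4) * ((1 - C) / 2)) = (\<Sum>n = 1..N. \<sigma> N n powr (-4) * ((1 - C) / 2 / 16))"
      proof (intro sum.cong refl)
        fix n assume "n \<in> {1..N}"
        from h16[OF this] show "(2 * \<sigma> N n) powr (-4) * ((1 - C) / 2) = \<sigma> N n powr (-4) * ((1 - C) / 2 / 16)"
          by simp
      qed
      have eb: "(\<Sum>n = 1..N. \<sigma> N n powr (-4) * ((1 - C) / 2 / 16)) = T * ((1 - C) / 2 / 16)"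
        unfolding T_def by (rule sum_distrib_right[symmetric])
      have cT: "c*T = (1/\<alpha>) * (T*((1-C)/2/16))" unfolding c_def by (simp add: field_simps)
      show ?thesis by (subst ea, subst eb, rule cT)
    qed
    also have "\<dots> \<le> S"
    proof -
      have "(\<Sum>n = 1..N. (2 * \<sigma> N n) powr (-4) * ((1 - C) / 2)) \<le> (\<Sum>n = 1..N. (2 * \<sigma> N n) powr (-4) *
        integral\<^sup>L lborel (\<lambda>t. (sin (t / \<sigma> N n))\<^sup>2 * p (t / \<sigma> N 1) / \<sigma> N 1))"
      proof (rule sum_mono)
        fix n assume n: "n \<in> {1..N}"
        have "(1 - C) / 2 \<le> integral\<^sup>L lborel (\<lambda>t. (sin (t / \<sigma> N n))\<^sup>2 * p (t / \<sigma> N 1) / \<sigma> N 1)"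
          by (rule K_lower[OF dens]) (use n pos mono N ft in auto)
        thus "(2 * \<sigma> N n) powr (-4) * ((1 - C) / 2) \<le> (2 * \<sigma> N n) powr (-4) *
          integral\<^sup>L lborel (\<lambda>t. (sin (t / \<sigma> N n))\<^sup>2 * p (t / \<sigma> N 1) / \<sigma> N 1)"
          by (intro mult_left_mono) auto
      qed
      thus ?thesis unfolding S_def using alpha by (intro mult_left_mono) auto
    qed
    finally have cS: "c * T \<le> S" .
    have "S powr (-1/4) / \<sigma> N N \<le> c powr (-1/4) * (\<sigma> N 1 * (\<Sum>n = 1..N. \<sigma> N n powr (-7)) * T powr (-3/2)) powr (1/6)"
      by (rule keybound[OF T sN s1 S7 c cS])
    thus ?thesis unfolding bandwidth_def X_def S_def[symmetric] T_def[symmetric] .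
  qed
  have X0: "X \<longlonglongrightarrow> 0" using lim unfolding X_def .
  have Xnn: "\<forall>\<^sub>F N in sequentially. 0 \<le> X N"
  proof (rule eventually_sequentiallyI[of 1])
    fix N :: nat assume N: "N \<ge> 1"
    have "0 \<le> \<sigma> N 1" using pos N by (simp add: less_imp_le)
    thus "0 \<le> X N" unfolding X_def by (intro mult_nonneg_nonneg sum_nonneg) auto
  qed
  have up: "(\<lambda>N. c powr (-1/4) * X N powr (1/6)) \<longlonglongrightarrow> 0"
    using tendsto_mult_right_zero[OF tendsto_zero_powrI[OF X0 tendsto_const Xnn, of "1/6"]] by simp
  have hnn: "0 \<le> bandwidth \<alpha> p \<sigma> N" for N unfolding bandwidth_def by simp
  have L2: "(\<lambda>N. bandwidth \<alpha> p \<sigma> N / \<sigma> N N) \<longlonglongrightarrow> 0"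
  proof (rule tendsto_sandwich[OF _ _ tendsto_const up])
    show "\<forall>\<^sub>F N in sequentially. 0 \<le> bandwidth \<alpha> p \<sigma> N / \<sigma> N N"
    proof (rule eventually_sequentiallyI[of 1])
      fix N :: nat assume "N \<ge> 1"
      hence "\<sigma> N N > 0" using pos by auto
      thus "0 \<le> bandwidth \<alpha> p \<sigma> N / \<sigma> N N" using hnn by simp
    qed
    show "\<forall>\<^sub>F N in sequentially. bandwidth \<alpha> p \<sigma> N / \<sigma> N N \<le> c powr (-1/4) * X N powr (1/6)"
      by (rule eventually_sequentiallyI[of 1]) (rule bnd)
  qed
  have eqM: "\<forall>\<^sub>F N in sequentially. bandwidth \<alpha> p \<sigma> N / \<sigma> N N = Max ((\<lambda>n. bandwidth \<alpha> p \<sigma> N / \<sigma> N n) ` {1..N})"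
  proof (rule eventually_sequentiallyI[of 1])
    fix N :: nat assume N: "N \<ge> 1"
    show "bandwidth \<alpha> p \<sigma> N / \<sigma> N N = Max ((\<lambda>n. bandwidth \<alpha> p \<sigma> N / \<sigma> N n) ` {1..N})"
    proof (rule Max_eqI[symmetric])
      show "finite ((\<lambda>n. bandwidth \<alpha> p \<sigma> N / \<sigma> N n) ` {1..N})" by simp
      show "bandwidth \<alpha> p \<sigma> N / \<sigma> N N \<in> (\<lambda>n. bandwidth \<alpha> p \<sigma> N / \<sigma> N n) ` {1..N}"
        using N by auto
      fix y assume "y \<in> (\<lambda>n. bandwidth \<alpha> p \<sigma> N / \<sigma> N n) ` {1..N}"
      then obtain n where n: "n \<in> {1..N}" and y: "y = bandwidth \<alpha> p \<sigma> N / \<sigma> N n" by auto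
      have "\<sigma> N N > 0" using pos N by auto
      moreover have "\<sigma> N N \<le> \<sigma> N n" using mono n by auto
      ultimately show "y \<le> bandwidth \<alpha> p \<sigma> N / \<sigma> N N"
        unfolding y using hnn by (intro divide_left_mono) auto
    qed
  qed
  have L1: "(\<lambda>N. Max ((\<lambda>n. bandwidth \<alpha> p \<sigma> N / \<sigma> N n) ` {1..N})) \<longlonglongrightarrow> 0"
    by (rule Lim_transform_eventually[OF L2 eqM])
  show ?thesis using L1 L2 by simp
qed

end
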